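(* In the setting described in the context, if $(g\circ h^a)_\sharp\mu=\mu$ for some $g\in\mathcal{G}$ and $a>0$, then $g_\star\nu=\nu$.
   Context: Let $(\mathcal{X},\Sigma)$ be a measurable space, $\Phi^t$ a flow on $\mathcal{X}$ (bijective measurable maps, $\Phi^{t_1}\circ\Phi^{t_2}=\Phi^{t_1+t_2}$, jointly measurable), $f_\sharp$ push-forward, $\mu$ an invariant probability measure ($\Phi^t_\sharp\mu=\mu$ for all $t$). Let $h^a$, $a>0$, be bijective measurable maps and $\mathcal{G}$ a group of bijective measurable maps of $\mathcal{X}$ with $h^{a_1}\circ h^{a_2}=h^{a_1a_2}$, $\Phi^t\circ g=g\circ\Phi^t$, $g\circ h^a=h^a\circ g$, $\Phi^t\circ h^a=h^a\circ\Phi^{t/a}$. $\mathcal{Y}\subset\mathcal{X}$ is a representative set: for every $x$ there is a unique $a=A(x)>0$ with $h^a(x)\in\mathcal{Y}$, $A$ measurable with $\int A\,d\mu<\infty$; $P(x)=h^{A(x)}(x)$. Standing assumption: $\int A\circ g\,d\mu<\infty$ for every $g\in\mathcal{G}$. For a measure $\rho$ and positive measurable $B$ with $0<\int B\,d\rho<\infty$, $\rho_B$ is the probability measure with $d\rho_B/d\rho=B/\int B\,d\rho$. $\nu=P_\sharp\mu_A$, and for $g\in\mathcal{G}$, $g_\star\nu=P_\sharp\big((g_\sharp\mu)_A\big)$ is the normalized measure associated with $g_\sharp\mu$ (equivalently $g_\star\nu=(P\circ g)_\sharp\nu_{A\circ g}$). *)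

theory Defs
  imports "HOL-Probability.Probability"
begin

definition normalized_density :: "'a measure \<Rightarrow> ('a \<Rightarrow> real) \<Rightarrow> 'a measure" where
  "normalized_density \<rho> B = density \<rho> (\<lambda>x. ennreal (B x / (\<integral>y. B y \<partial>\<rho>)))"

end

theory Submission
  imports Defs
begin

lemma nd_h_invariant:
  fixes \<rho> M :: "'a measure" and h :: "real \<Rightarrow> 'a \<Rightarrow> 'a" and A :: "'a \<Rightarrow> real"
  assumes sets_rho: "sets \<rho> = sets M"
    and h_meas: "\<And>b. b > 0 \<Longrightarrow> h b \<in> M \<rightarrow>\<^sub>M M"
    and h_mult: "\<And>a1 a2 x. a1 > 0 \<Longrightarrow> a2 > 0 \<Longrightarrow> x \<in> space M \<Longrightarrow>
                   h a1 (h a2 x) = h (a1 * a2) x"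
    and A_pos: "\<And>x. x \<in> space M \<Longrightarrow> A x > 0"
    and A_rep: "\<And>x. x \<in> space M \<Longrightarrow> h (A x) x \<in> Y"
    and A_unique: "\<And>x b. x \<in> space M \<Longrightarrow> b > 0 \<Longrightarrow> h b x \<in> Y \<Longrightarrow> b = A x"
    and A_meas: "A \<in> borel_measurable M"
    and P_def: "\<And>x. P x = h (A x) x"
    and P_meas: "P \<in> M \<rightarrow>\<^sub>M M"
    and b_pos: "b > 0"
  shows "distr (normalized_density (distr \<rho> M (h b)) A) M P = distr (normalized_density \<rho> A) M P"
proof -
  have sp: "space \<rho> = space M" using sets_rho by (rule sets_eq_imp_space_eq)
  have hbm: "h b \<in> \<rho> \<rightarrow>\<^sub>M M" using h_meas[OF b_pos] measurable_cong_sets[OF sets_rho refl] by blast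
  have hsp: "h b x \<in> space M" if "x \<in> space M" for x
    using h_meas[OF b_pos] that by (meson measurable_space)
  have Ah: "A (h b x) = A x / b" if x: "x \<in> space M" for x
  proof -
    have "h (A x / b) (h b x) = h (A x / b * b) x"
      using h_mult[of "A x / b" b x] A_pos[OF x] b_pos x by auto
    also have "\<dots> = h (A x) x" using b_pos by simp
    finally have "h (A x / b) (h b x) \<in> Y" using A_rep[OF x] by simp
    then show ?thesis using A_unique[of "h b x" "A x / b"] hsp[OF x] A_pos[OF x] b_pos by auto
  qed
  have Ph: "P (h b x) = P x" if x: "x \<in> space M" for x
  proof -
    have "P (h b x) = h (A x / b) (h b x)" using P_def Ah[OF x] by simp
    also have "\<dots> = h (A x / b * b) x"
      using h_mult[of "A x / b" b x] A_pos[OF x] b_pos x by auto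
    also have "\<dots> = P x" using b_pos P_def by simp
    finally show ?thesis .
  qed
  have Am\<rho>: "A \<in> borel_measurable \<rho>" using A_meas measurable_cong_sets[OF sets_rho refl] by blast
  define c where "c = (\<integral>y. A y \<partial>\<rho>)"
  have cint: "(\<integral>y. A y \<partial>distr \<rho> M (h b)) = c / b"
  proof -
    have "(\<integral>y. A y \<partial>distr \<rho> M (h b)) = (\<integral>x. A (h b x) \<partial>\<rho>)"
      using integral_distr[OF hbm A_meas] by simp
    also have "\<dots> = (\<integral>x. A x / b \<partial>\<rho>)"
      by (rule Bochner_Integration.integral_cong) (auto simp: sp Ah)
    also have "\<dots> = c / b" unfolding c_def by simp
    finally show ?thesis .
  qed
  have fx: "(A x / b) / (c / b) = A x / c" for x using b_pos by (cases "c = 0") (auto simp: field_simps)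
  show ?thesis
  proof (rule measure_eqI)
    show "sets (distr (normalized_density (distr \<rho> M (h b)) A) M P) = sets (distr (normalized_density \<rho> A) M P)"
      by simp
  next
    fix S assume "S \<in> sets (distr (normalized_density (distr \<rho> M (h b)) A) M P)"
    then have S: "S \<in> sets M" by simp
    have Pm\<rho>: "P \<in> \<rho> \<rightarrow>\<^sub>M M" using P_meas measurable_cong_sets[OF sets_rho refl] by blast
    have pre: "P -` S \<inter> space M \<in> sets M" using P_meas S by (rule measurable_sets)
    have fm: "(\<lambda>x. ennreal (A x / c')) \<in> borel_measurable M" for c' using A_meas by measurable
    have fm2: "(\<lambda>x. ennreal (A x * b / c)) \<in> borel_measurable M" using A_meas by measurable
    have "emeasure (distr (normalized_density (distr \<rho> M (h b)) A) M P) S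
        = emeasure (normalized_density (distr \<rho> M (h b)) A) (P -` S \<inter> space M)"
      unfolding normalized_density_def
      by (subst emeasure_distr) (auto simp: S P_meas)
    also have "\<dots> = (\<integral>\<^sup>+ y. ennreal (A y / (c / b)) * indicator (P -` S \<inter> space M) y \<partial>distr \<rho> M (h b))"
      unfolding normalized_density_def cint
      by (subst emeasure_density) (auto simp: pre fm fm2)
    also have "\<dots> = (\<integral>\<^sup>+ x. ennreal (A (h b x) / (c / b)) * indicator (P -` S \<inter> space M) (h b x) \<partial>\<rho>)"
      proof -
        have fm3: "(\<lambda>y. ennreal (A y / (c / b)) * indicator (P -` S \<inter> space M) y) \<in> borel_measurable M"
          by (intro borel_measurable_times_ennreal fm borel_measurable_indicator[OF pre])
        show ?thesis using fm3 by (intro nn_integral_distr[OF hbm]) simp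
      qed
    also have "\<dots> = (\<integral>\<^sup>+ x. ennreal (A x / c) * indicator (P -` S \<inter> space M) x \<partial>\<rho>)"
      by (rule nn_integral_cong) (use b_pos in \<open>auto simp: sp Ah Ph fx hsp indicator_def\<close>)
    also have "\<dots> = emeasure (normalized_density \<rho> A) (P -` S \<inter> space M)"
      unfolding normalized_density_def c_def
      by (subst emeasure_density) (auto simp: pre fm Am\<rho> sets_rho measurable_cong_sets[OF sets_rho refl])
    also have "\<dots> = emeasure (distr (normalized_density \<rho> A) M P) S"
      unfolding normalized_density_def
      by (subst emeasure_distr) (auto simp: S Pm\<rho> sp)
    finally show "emeasure (distr (normalized_density (distr \<rho> M (h b)) A) M P) S = emeasure (distr (normalized_density \<rho> A) M P) S" .
  qed
qed

theorem corollary2: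
  fixes M :: "'a measure"
    and \<Phi> :: "real \<Rightarrow> 'a \<Rightarrow> 'a"
    and \<mu> :: "'a measure"
    and h :: "real \<Rightarrow> 'a \<Rightarrow> 'a"
    and G :: "('a \<Rightarrow> 'a) set"
    and Y :: "'a set"
    and A :: "'a \<Rightarrow> real"
    and P :: "'a \<Rightarrow> 'a"
    and g :: "'a \<Rightarrow> 'a"
    and a :: real
  assumes flow_bij: "\<And>t. bij_betw (\<Phi> t) (space M) (space M)"
    and flow_meas: "\<And>t. \<Phi> t \<in> M \<rightarrow>\<^sub>M M"
    and flow_group: "\<And>t1 t2 x. x \<in> space M \<Longrightarrow> \<Phi> t1 (\<Phi> t2 x) = \<Phi> (t1 + t2) x"
    and flow_joint: "(\<lambda>(t, x). \<Phi> t x) \<in> (borel :: real measure) \<Otimes>\<^sub>M M \<rightarrow>\<^sub>M M"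
    and mu_prob: "prob_space \<mu>"
    and mu_sets: "sets \<mu> = sets M"
    and mu_inv: "\<And>t. distr \<mu> M (\<Phi> t) = \<mu>"
    and h_bij: "\<And>b. b > 0 \<Longrightarrow> bij_betw (h b) (space M) (space M)"
    and h_meas: "\<And>b. b > 0 \<Longrightarrow> h b \<in> M \<rightarrow>\<^sub>M M"
    and h_mult: "\<And>a1 a2 x. a1 > 0 \<Longrightarrow> a2 > 0 \<Longrightarrow> x \<in> space M \<Longrightarrow>
                   h a1 (h a2 x) = h (a1 * a2) x"
    and G_bij: "\<And>f. f \<in> G \<Longrightarrow> bij_betw f (space M) (space M)"
    and G_meas: "\<And>f. f \<in> G \<Longrightarrow> f \<in> M \<rightarrow>\<^sub>M M"
    and G_id: "id \<in> G"
    and G_comp: "\<And>f1 f2. f1 \<in> G \<Longrightarrow> f2 \<in> G \<Longrightarrow> f1 \<circ> f2 \<in> G"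
    and G_inv: "\<And>f. f \<in> G \<Longrightarrow> \<exists>f'\<in>G. \<forall>x\<in>space M. f' (f x) = x \<and> f (f' x) = x"
    and G_flow: "\<And>f t x. f \<in> G \<Longrightarrow> x \<in> space M \<Longrightarrow> \<Phi> t (f x) = f (\<Phi> t x)"
    and G_h: "\<And>f b x. f \<in> G \<Longrightarrow> b > 0 \<Longrightarrow> x \<in> space M \<Longrightarrow> f (h b x) = h b (f x)"
    and flow_h: "\<And>t b x. b > 0 \<Longrightarrow> x \<in> space M \<Longrightarrow> \<Phi> t (h b x) = h b (\<Phi> (t / b) x)"
    and Y_sub: "Y \<subseteq> space M"
    and A_pos: "\<And>x. x \<in> space M \<Longrightarrow> A x > 0"
    and A_rep: "\<And>x. x \<in> space M \<Longrightarrow> h (A x) x \<in> Y"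
    and A_unique: "\<And>x b. x \<in> space M \<Longrightarrow> b > 0 \<Longrightarrow> h b x \<in> Y \<Longrightarrow> b = A x"
    and A_meas: "A \<in> borel_measurable M"
    and A_int: "integrable \<mu> A"
    and P_def: "\<And>x. P x = h (A x) x"
    and P_meas: "P \<in> M \<rightarrow>\<^sub>M M"
    and standing: "\<And>f. f \<in> G \<Longrightarrow> integrable \<mu> (A \<circ> f)"
    and g_in: "g \<in> G"
    and a_pos: "a > 0"
    and hyp: "distr \<mu> M (g \<circ> h a) = \<mu>"
  shows "distr (normalized_density (distr \<mu> M g) A) M P
           = distr (normalized_density \<mu> A) M P"
proof -
  define \<rho> where "\<rho> = distr \<mu> M g"
  have sr: "sets \<rho> = sets M" unfolding \<rho>_def by simp
  have gm: "g \<in> \<mu> \<rightarrow>\<^sub>M M" using G_meas[OF g_in] measurable_cong_sets[OF mu_sets refl] by blast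
  have "distr \<rho> M (h a) = distr \<mu> M (h a \<circ> g)"
    unfolding \<rho>_def by (rule distr_distr[OF h_meas[OF a_pos] gm])
  also have "\<dots> = distr \<mu> M (g \<circ> h a)"
    by (rule distr_cong) (auto simp: G_h[OF g_in a_pos] sets_eq_imp_space_eq[OF mu_sets])
  also have "\<dots> = \<mu>" by (rule hyp)
  finally have e: "distr \<rho> M (h a) = \<mu>" .
  have "distr (normalized_density (distr \<rho> M (h a)) A) M P = distr (normalized_density \<rho> A) M P"
    by (rule nd_h_invariant[OF sr h_meas h_mult A_pos A_rep A_unique A_meas P_def P_meas a_pos])
  from this[unfolded e] show ?thesis unfolding \<rho>_def by simp
qed

end
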